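(* Assume $|J|=1$, the travel times $\tau$ have a convex potential $\Phi$, and all externality factors $g_{i,p}$ are constant. Then for every $0\le\lambda_1<\lambda_2$ and all $x_1\in\mathrm{WE}(\lambda_1)$, $x_2\in\mathrm{WE}(\lambda_2)$, it holds that $G(x_1)\ge G(x_2)$ and $\Phi(x_1)\le\Phi(x_2)$.
   Context: Let $G=(V,E)$ be a directed graph and $I$ a finite set of commodities; commodity $i$ has source $s_i$, sink $t_i$, demand $d_i>0$; $\mathcal P_i$ is its set of simple $s_i$–$t_i$ paths, $\mathcal P=\{(i,p)\}$. A flow $x\in\mathbb{R}^{\mathcal P}_{\ge0}$ is feasible if $\sum_{p\in\mathcal P_i}x_{i,p}=d_i$ for all $i$; $\mathcal F$ is the set of feasible flows. There is one externality class with constant factors $g_{i,p}\ge0$, $G(x)=\sum_{(i,p)}g_{i,p}x_{i,p}$. Travel times $\tau_{i,p}:\mathcal F\to\mathbb{R}$ have a potential: a differentiable $\Phi:\mathbb{R}^{\mathcal P}\to\mathbb{R}$ with $\tau_{i,p}(x)=\partial\Phi/\partial x_{i,p}(x)$ for $x\in\mathcal F$, assumed convex. For $\lambda\ge0$, $c^\lambda_{i,p}(x)=\tau_{i,p}(x)+\lambda g_{i,p}$, and $x\in\mathrm{WE}(\lambda)$ means $x\in\mathcal F$ and $x_{i,p}>0$ implies $c^\lambda_{i,p}(x)\le c^\lambda_{i,q}(x)$ for all $q\in\mathcal P_i$. *)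

theory Defs
  imports "HOL-Analysis.Analysis"
begin

definition simple_path :: "'v set \<Rightarrow> ('v \<times> 'v) set \<Rightarrow> 'v \<Rightarrow> 'v \<Rightarrow> 'v list \<Rightarrow> bool" where
  "simple_path V E s t p \<longleftrightarrow> p \<noteq> [] \<and> hd p = s \<and> last p = t \<and> distinct p \<and> set p \<subseteq> V \<and>
     (\<forall>k. Suc k < length p \<longrightarrow> (p ! k, p ! Suc k) \<in> E)"

definition paths :: "'v set \<Rightarrow> ('v \<times> 'v) set \<Rightarrow> 'v \<Rightarrow> 'v \<Rightarrow> 'v list set" where
  "paths V E s t = {p. simple_path V E s t p}"

definition Pset :: "'v set \<Rightarrow> ('v \<times> 'v) set \<Rightarrow> 'c set \<Rightarrow> ('c \<Rightarrow> 'v) \<Rightarrow> ('c \<Rightarrow> 'v) \<Rightarrow> ('c \<times> 'v list) set" where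
  "Pset V E I s t = {(i, p). i \<in> I \<and> p \<in> paths V E (s i) (t i)}"

definition vecs :: "'a set \<Rightarrow> ('a \<Rightarrow> real) set" where
  "vecs P = {x. \<forall>a. a \<notin> P \<longrightarrow> x a = 0}"

definition feasible :: "'v set \<Rightarrow> ('v \<times> 'v) set \<Rightarrow> 'c set \<Rightarrow> ('c \<Rightarrow> 'v) \<Rightarrow> ('c \<Rightarrow> 'v) \<Rightarrow> ('c \<Rightarrow> real)
     \<Rightarrow> (('c \<times> 'v list) \<Rightarrow> real) set" where
  "feasible V E I s t d = {x. x \<in> vecs (Pset V E I s t) \<and> (\<forall>a\<in>Pset V E I s t. 0 \<le> x a) \<and>
      (\<forall>i\<in>I. (\<Sum>p\<in>paths V E (s i) (t i). x (i, p)) = d i)}"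

(* Frechet differentiability on the finite-dimensional space vecs P (l1 norm),
   with gradient D (D a = partial derivative w.r.t. coordinate a). *)
definition has_gradient_on :: "'a set \<Rightarrow> (('a \<Rightarrow> real) \<Rightarrow> real) \<Rightarrow> ('a \<Rightarrow> real) \<Rightarrow> ('a \<Rightarrow> real) \<Rightarrow> bool" where
  "has_gradient_on P \<Phi> D x \<longleftrightarrow>
     (\<forall>e>0. \<exists>\<delta>>0. \<forall>h\<in>vecs P. (\<Sum>a\<in>P. \<bar>h a\<bar>) < \<delta> \<longrightarrow>
        \<bar>\<Phi> (\<lambda>a. x a + h a) - \<Phi> x - (\<Sum>a\<in>P. D a * h a)\<bar> \<le> e * (\<Sum>a\<in>P. \<bar>h a\<bar>))"

definition ext_total :: "'a set \<Rightarrow> ('a \<Rightarrow> real) \<Rightarrow> ('a \<Rightarrow> real) \<Rightarrow> real" where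
  "ext_total P g x = (\<Sum>a\<in>P. g a * x a)"

definition WE :: "'v set \<Rightarrow> ('v \<times> 'v) set \<Rightarrow> 'c set \<Rightarrow> ('c \<Rightarrow> 'v) \<Rightarrow> ('c \<Rightarrow> 'v) \<Rightarrow> ('c \<Rightarrow> real)
     \<Rightarrow> (('c \<times> 'v list) \<Rightarrow> (('c \<times> 'v list) \<Rightarrow> real) \<Rightarrow> real) \<Rightarrow> (('c \<times> 'v list) \<Rightarrow> real) \<Rightarrow> real
     \<Rightarrow> (('c \<times> 'v list) \<Rightarrow> real) set" where
  "WE V E I s t d \<tau> g lam = {x. x \<in> feasible V E I s t d \<and>
     (\<forall>i\<in>I. \<forall>p\<in>paths V E (s i) (t i). x (i, p) > 0 \<longrightarrow>
        (\<forall>q\<in>paths V E (s i) (t i). \<tau> (i, p) x + lam * g (i, p) \<le> \<tau> (i, q) x + lam * g (i, q)))}"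

definition convex_on_vecs :: "'a set \<Rightarrow> (('a \<Rightarrow> real) \<Rightarrow> real) \<Rightarrow> bool" where
  "convex_on_vecs P \<Phi> \<longleftrightarrow> (\<forall>x\<in>vecs P. \<forall>y\<in>vecs P. \<forall>u::real. 0 \<le> u \<and> u \<le> 1 \<longrightarrow>
      \<Phi> (\<lambda>a. (1 - u) * x a + u * y a) \<le> (1 - u) * \<Phi> x + u * \<Phi> y)"

end

theory Submission
  imports Defs
begin

lemma finite_paths:
  assumes "finite V" shows "finite (paths V E s t)"
proof -
  have "paths V E s t \<subseteq> {xs. set xs \<subseteq> V \<and> length xs \<le> card V}"
  proof
    fix p assume "p \<in> paths V E s t"
    then have p: "distinct p" "set p \<subseteq> V" by (auto simp: paths_def simple_path_def)
    have "length p = card (set p)" using distinct_card[OF p(1)] by simp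
    also have "\<dots> \<le> card V" using card_mono[OF assms p(2)] .
    finally show "p \<in> {xs. set xs \<subseteq> V \<and> length xs \<le> card V}" using p by simp
  qed
  moreover have "finite {xs. set xs \<subseteq> V \<and> length xs \<le> card V}"
    by (rule finite_lists_length_le[OF assms])
  ultimately show ?thesis by (rule finite_subset)
qed

lemma Pset_Sigma: "Pset V E I s t = Sigma I (\<lambda>i. paths V E (s i) (t i))"
  by (auto simp: Pset_def)

lemma finite_Pset: "finite V \<Longrightarrow> finite I \<Longrightarrow> finite (Pset V E I s t)"
  by (simp add: Pset_Sigma finite_paths)

lemma grad_ineq:
  assumes fin: "finite P" and x: "x \<in> vecs P" and y: "y \<in> vecs P"
    and cv: "convex_on_vecs P \<Phi>" and gr: "has_gradient_on P \<Phi> D x"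
  shows "\<Phi> x + (\<Sum>a\<in>P. D a * (y a - x a)) \<le> \<Phi> y"
proof (rule ccontr)
  define h where "h = (\<lambda>a. y a - x a)"
  define n where "n = (\<Sum>a\<in>P. \<bar>h a\<bar>)"
  define S where "S = (\<Sum>a\<in>P. D a * h a)"
  assume "\<not> ?thesis"
  hence K: "\<Phi> y < \<Phi> x + S" by (simp add: S_def h_def)
  have n0: "n \<ge> 0" unfolding n_def by (rule sum_nonneg) auto
  have "n \<noteq> 0"
  proof
    assume "n = 0"
    hence "\<forall>a\<in>P. \<bar>h a\<bar> = 0" using sum_nonneg_eq_0_iff[OF fin, of "\<lambda>a. \<bar>h a\<bar>"] unfolding n_def by simp
    hence "\<forall>a. h a = 0" using x y by (auto simp: h_def vecs_def)
    hence "y = x" by (auto simp: h_def)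
    moreover have "S = 0" using \<open>\<forall>a. h a = 0\<close> by (simp add: S_def)
    ultimately show False using K by simp
  qed
  hence npos: "n > 0" using n0 by simp
  define e where "e = (\<Phi> x + S - \<Phi> y) / (2 * n)"
  have epos: "e > 0" using K npos by (simp add: e_def)
  obtain \<delta> where dpos: "\<delta> > 0" and hd: "\<forall>k\<in>vecs P. (\<Sum>a\<in>P. \<bar>k a\<bar>) < \<delta> \<longrightarrow>
        \<bar>\<Phi> (\<lambda>a. x a + k a) - \<Phi> x - (\<Sum>a\<in>P. D a * k a)\<bar> \<le> e * (\<Sum>a\<in>P. \<bar>k a\<bar>)"
    using gr epos unfolding has_gradient_on_def by blast
  define u where "u = min 1 (\<delta> / (2 * n))"
  have u0: "u > 0" using dpos npos by (simp add: u_def)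
  have u1: "u \<le> 1" by (simp add: u_def)
  have un: "u * n < \<delta>"
  proof -
    have "u * n \<le> (\<delta> / (2 * n)) * n" using npos by (intro mult_right_mono) (auto simp: u_def)
    also have "\<dots> = \<delta> / 2" using npos by simp
    finally show ?thesis using dpos by simp
  qed
  define k where "k = (\<lambda>a. u * h a)"
  have kv: "k \<in> vecs P" using x y by (auto simp: vecs_def k_def h_def)
  have sk: "(\<Sum>a\<in>P. \<bar>k a\<bar>) = u * n"
    using u0 by (simp add: k_def n_def abs_mult sum_distrib_left)
  have dk: "(\<Sum>a\<in>P. D a * k a) = u * S"
    by (simp add: k_def S_def sum_distrib_left algebra_simps)
  have b1: "\<bar>\<Phi> (\<lambda>a. x a + k a) - \<Phi> x - u * S\<bar> \<le> e * (u * n)"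
    using hd kv un sk dk by auto
  have eq: "(\<lambda>a. (1 - u) * x a + u * y a) = (\<lambda>a. x a + k a)"
    by (auto simp: k_def h_def algebra_simps)
  have b2: "\<Phi> (\<lambda>a. x a + k a) \<le> (1 - u) * \<Phi> x + u * \<Phi> y"
    using cv x y u0 u1 unfolding convex_on_vecs_def eq[symmetric] by auto
  have "u * S - e * (u * n) \<le> u * (\<Phi> y - \<Phi> x)" using b1 b2 by (simp add: algebra_simps)
  hence "u * (S - e * n) \<le> u * (\<Phi> y - \<Phi> x)" by (simp add: algebra_simps)
  hence c: "S - e * n \<le> \<Phi> y - \<Phi> x" using u0 by simp
  have "e * n = (\<Phi> x + S - \<Phi> y) / 2" using npos by (simp add: e_def)
  thus False using c K by simp
qed

lemma WE_opt:
  assumes fV: "finite V" and fI: "finite I" and dp: "\<forall>i\<in>I. d i > 0"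
    and xw: "x \<in> WE V E I s t d \<tau> g lam" and yf: "y \<in> feasible V E I s t d"
  shows "(\<Sum>a\<in>Pset V E I s t. (\<tau> a x + lam * g a) * x a)
       \<le> (\<Sum>a\<in>Pset V E I s t. (\<tau> a x + lam * g a) * y a)"
proof -
  define c where "c = (\<lambda>a. \<tau> a x + lam * g a)"
  have per: "(\<Sum>p\<in>paths V E (s i) (t i). c (i,p) * x (i,p))
       \<le> (\<Sum>p\<in>paths V E (s i) (t i). c (i,p) * y (i,p))" if i: "i \<in> I" for i
  proof -
    let ?Q = "paths V E (s i) (t i)"
    have fQ: "finite ?Q" using finite_paths[OF fV] .
    have xs: "(\<Sum>p\<in>?Q. x (i,p)) = d i" and ys: "(\<Sum>p\<in>?Q. y (i,p)) = d i"
      using xw yf i by (auto simp: WE_def feasible_def)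
    have xn: "\<forall>p\<in>?Q. x (i,p) \<ge> 0" and yn: "\<forall>p\<in>?Q. y (i,p) \<ge> 0"
      using xw yf i by (auto simp: WE_def feasible_def Pset_def)
    have wc: "\<forall>p\<in>?Q. x (i,p) > 0 \<longrightarrow> (\<forall>q\<in>?Q. c (i,p) \<le> c (i,q))"
      using xw i by (auto simp: WE_def c_def)
    obtain p0 where p0: "p0 \<in> ?Q" "x (i,p0) > 0"
    proof (rule ccontr)
      assume "\<not> thesis"
      hence "\<forall>p\<in>?Q. x (i,p) \<le> 0" using that by force
      hence "(\<Sum>p\<in>?Q. x (i,p)) \<le> 0" by (simp add: sum_nonpos)
      thus False using xs dp i by auto
    qed
    define m where "m = c (i,p0)"
    have mle: "\<forall>q\<in>?Q. m \<le> c (i,q)" using wc p0 by (simp add: m_def)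
    have "(\<Sum>p\<in>?Q. c (i,p) * x (i,p)) = (\<Sum>p\<in>?Q. m * x (i,p))"
    proof (rule sum.cong)
      fix p assume p: "p \<in> ?Q"
      show "c (i,p) * x (i,p) = m * x (i,p)"
      proof (cases "x (i,p) > 0")
        case True
        hence "c (i,p) \<le> m" using wc p p0 by (auto simp: m_def)
        thus ?thesis using mle p by force
      next
        case False
        hence "x (i,p) = 0" using xn p by force
        thus ?thesis by simp
      qed
    qed simp
    also have "\<dots> = m * d i" using xs by (simp add: sum_distrib_left[symmetric])
    also have "\<dots> = (\<Sum>p\<in>?Q. m * y (i,p))" using ys by (simp add: sum_distrib_left[symmetric])
    also have "\<dots> \<le> (\<Sum>p\<in>?Q. c (i,p) * y (i,p))"
      using mle yn by (intro sum_mono mult_right_mono) auto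
    finally show ?thesis .
  qed
  have "(\<Sum>a\<in>Pset V E I s t. c a * x a) = (\<Sum>i\<in>I. \<Sum>p\<in>paths V E (s i) (t i). c (i,p) * x (i,p))"
    unfolding Pset_Sigma using fI finite_paths[OF fV] by (subst sum.Sigma) auto
  also have "\<dots> \<le> (\<Sum>i\<in>I. \<Sum>p\<in>paths V E (s i) (t i). c (i,p) * y (i,p))"
    using per by (rule sum_mono)
  also have "\<dots> = (\<Sum>a\<in>Pset V E I s t. c a * y a)"
    unfolding Pset_Sigma using fI finite_paths[OF fV] by (subst sum.Sigma) auto
  finally show ?thesis by (simp add: c_def)
qed

theorem lemma4p6:
  fixes V :: "'v set" and E :: "('v \<times> 'v) set" and I :: "'c set"
    and s t :: "'c \<Rightarrow> 'v" and d :: "'c \<Rightarrow> real"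
    and g :: "('c \<times> 'v list) \<Rightarrow> real"
    and \<tau> :: "('c \<times> 'v list) \<Rightarrow> (('c \<times> 'v list) \<Rightarrow> real) \<Rightarrow> real"
    and \<Phi> :: "(('c \<times> 'v list) \<Rightarrow> real) \<Rightarrow> real"
    and lam1 lam2 :: real and x1 x2 :: "('c \<times> 'v list) \<Rightarrow> real"
  assumes "finite V" and "E \<subseteq> V \<times> V" and "finite I"
    and "\<forall>i\<in>I. s i \<in> V \<and> t i \<in> V" and "\<forall>i\<in>I. d i > 0"
    and "\<forall>a\<in>Pset V E I s t. g a \<ge> 0"
    and "\<forall>x\<in>vecs (Pset V E I s t). \<exists>D. has_gradient_on (Pset V E I s t) \<Phi> D x"
    and "\<forall>x\<in>feasible V E I s t d. has_gradient_on (Pset V E I s t) \<Phi> (\<lambda>a. \<tau> a x) x"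
    and "convex_on_vecs (Pset V E I s t) \<Phi>"
    and "0 \<le> lam1" and "lam1 < lam2"
    and "x1 \<in> WE V E I s t d \<tau> g lam1" and "x2 \<in> WE V E I s t d \<tau> g lam2"
  shows "ext_total (Pset V E I s t) g x1 \<ge> ext_total (Pset V E I s t) g x2
       \<and> \<Phi> x1 \<le> \<Phi> x2"
proof -
  define P where "P = Pset V E I s t"
  have fP: "finite P" using finite_Pset[OF assms(1,3)] by (simp add: P_def)
  have f1: "x1 \<in> feasible V E I s t d" and f2: "x2 \<in> feasible V E I s t d"
    using assms(12,13) by (auto simp: WE_def)
  have v1: "x1 \<in> vecs P" and v2: "x2 \<in> vecs P" using f1 f2 by (auto simp: feasible_def P_def)
  define A where "A = (\<Sum>a\<in>P. \<tau> a x1 * (x2 a - x1 a))"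
  define B where "B = (\<Sum>a\<in>P. \<tau> a x2 * (x1 a - x2 a))"
  define Gd where "Gd = (\<Sum>a\<in>P. g a * (x2 a - x1 a))"
  have g1: "\<Phi> x1 + A \<le> \<Phi> x2"
    unfolding A_def using grad_ineq[OF fP v1 v2] assms(9) assms(8) f1 by (auto simp: P_def)
  have g2: "\<Phi> x2 + B \<le> \<Phi> x1"
    unfolding B_def using grad_ineq[OF fP v2 v1] assms(9) assms(8) f2 by (auto simp: P_def)
  have w1: "0 \<le> A + lam1 * Gd"
  proof -
    have "(\<Sum>a\<in>P. (\<tau> a x1 + lam1 * g a) * x2 a) - (\<Sum>a\<in>P. (\<tau> a x1 + lam1 * g a) * x1 a)
        = A + lam1 * Gd"
      by (simp add: A_def Gd_def sum_subtractf[symmetric] sum_distrib_left sum.distrib[symmetric] algebra_simps)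
    moreover have "(\<Sum>a\<in>P. (\<tau> a x1 + lam1 * g a) * x1 a) \<le> (\<Sum>a\<in>P. (\<tau> a x1 + lam1 * g a) * x2 a)"
      using WE_opt[OF assms(1,3,5,12) f2] by (simp add: P_def)
    ultimately show ?thesis by simp
  qed
  have w2: "0 \<le> B - lam2 * Gd"
  proof -
    have "(\<Sum>a\<in>P. (\<tau> a x2 + lam2 * g a) * x1 a) - (\<Sum>a\<in>P. (\<tau> a x2 + lam2 * g a) * x2 a)
        = B - lam2 * Gd"
      by (simp add: B_def Gd_def sum_subtractf[symmetric] sum_distrib_left sum.distrib[symmetric] algebra_simps)
    moreover have "(\<Sum>a\<in>P. (\<tau> a x2 + lam2 * g a) * x2 a) \<le> (\<Sum>a\<in>P. (\<tau> a x2 + lam2 * g a) * x1 a)"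
      using WE_opt[OF assms(1,3,5,13) f1] by (simp add: P_def)
    ultimately show ?thesis by simp
  qed
  have "0 \<le> (lam1 - lam2) * Gd" using g1 g2 w1 w2 by (simp add: algebra_simps)
  hence Gd0: "Gd \<le> 0" using assms(11) by (simp add: zero_le_mult_iff)
  have "lam1 * Gd \<le> 0" using Gd0 assms(10) by (simp add: mult_nonneg_nonpos)
  hence "\<Phi> x1 \<le> \<Phi> x2" using g1 w1 by simp
  moreover have "Gd = ext_total P g x2 - ext_total P g x1"
    by (simp add: Gd_def ext_total_def sum_subtractf[symmetric] algebra_simps)
  ultimately show ?thesis using Gd0 by (simp add: P_def)
qed

end
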